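(* Let $n\ge3$ and $0<q<1$. For every relationship network $G$ on $V$, $P_D(G)\le 1-(1-q)^2$. Consequently, if every agent $j$ satisfies one of: $|F_j|\ge2$; or $F_j=\varnothing$ and $|I_j|\ge2$; or $E_j=V\setminus\{j\}$, then $P_R(G)\ge P_D(G)$.
   Context: Let $V=\{1,\dots,n\}$. A relationship network $G$ assigns to every unordered pair of distinct agents exactly one of the symmetric relations friends, enemies, impartial; $F_j,E_j,I_j$ are the friends, enemies, impartials of $j$. Each agent is needy independently with probability $q$; $N$ is the random needy set; every agent $j$ reports truthfully $(N,F_j,E_j)$. Random dictatorship $g^R$: for agent $j$, choice set $C_j$: if $F_j\ne\varnothing$, $C_j=F_j\cap N$ if nonempty, else $F_j$; if $F_j=\varnothing\ne I_j$, $C_j=I_j\cap N$ if nonempty, else $I_j$; otherwise $C_j=E_j\cap N$ if nonempty, else $E_j$. $g^R_i=\frac1n\sum_{j\ne i}\mathbf 1[i\in C_j]/|C_j|$. Duples $g^D$: for agent $l$ and $j\ne l$, $\mathrm{lev}_l(j)=1,\dots,6$ according as $j\in F_l\cap N$, $F_l\setminus N$, $I_l\cap N$, $I_l\setminus N$, $E_l\cap N$, $E_l\setminus N$. For distinct $j,k$, agent $l\notin\{j,k\}$ votes for $j$ against $k$ if $\mathrm{lev}_l(j)<\mathrm{lev}_l(k)$; $x_{jk}$ counts these votes. $g^D_j(\{j,k\})=1,\tfrac12,0$ as $x_{jk}>,=,<x_{kj}$, $g^D_k(\{j,k\})=1-g^D_j(\{j,k\})$, and $g^D_i=\frac{2}{n(n-1)}\sum_{j\ne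 i}g^D_i(\{i,j\})$. $P_R(G)$ and $P_D(G)$ denote the probabilities that $g^R$, resp. $g^D$, select a needy agent, i.e. $\mathbb E[\sum_{i\in N}g_i]$ under truthful reports. *)

theory Defs
  imports Complex_Main
begin

text \<open>Agents are V = {1..n}. A relationship network assigns to each ordered pair
  a relation; it must be symmetric on distinct agents of V (values on the diagonal
  or outside V are irrelevant).\<close>

datatype relation = Friends | Enemies | Impartial

definition agents :: "nat \<Rightarrow> nat set" where
  "agents n = {1..n}"

definition network :: "nat \<Rightarrow> (nat \<Rightarrow> nat \<Rightarrow> relation) \<Rightarrow> bool" where
  "network n G \<longleftrightarrow> (\<forall>i\<in>agents n. \<forall>j\<in>agents n. i \<noteq> j \<longrightarrow> G i j = G j i)"

definition Fr :: "nat \<Rightarrow> (nat \<Rightarrow> nat \<Rightarrow> relation) \<Rightarrow> nat \<Rightarrow> nat set" where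
  "Fr n G j = {i \<in> agents n. i \<noteq> j \<and> G j i = Friends}"

definition En :: "nat \<Rightarrow> (nat \<Rightarrow> nat \<Rightarrow> relation) \<Rightarrow> nat \<Rightarrow> nat set" where
  "En n G j = {i \<in> agents n. i \<noteq> j \<and> G j i = Enemies}"

definition Im :: "nat \<Rightarrow> (nat \<Rightarrow> nat \<Rightarrow> relation) \<Rightarrow> nat \<Rightarrow> nat set" where
  "Im n G j = {i \<in> agents n. i \<noteq> j \<and> G j i = Impartial}"

definition choice_set :: "nat \<Rightarrow> (nat \<Rightarrow> nat \<Rightarrow> relation) \<Rightarrow> nat set \<Rightarrow> nat \<Rightarrow> nat set" where
  "choice_set n G N j =
    (let F = Fr n G j; I = Im n G j; E = En n G j in
     if F \<noteq> {} then (if F \<inter> N \<noteq> {} then F \<inter> N else F)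
     else if I \<noteq> {} then (if I \<inter> N \<noteq> {} then I \<inter> N else I)
     else (if E \<inter> N \<noteq> {} then E \<inter> N else E))"

definition gR :: "nat \<Rightarrow> (nat \<Rightarrow> nat \<Rightarrow> relation) \<Rightarrow> nat set \<Rightarrow> nat \<Rightarrow> real" where
  "gR n G N i = (1 / real n) *
     (\<Sum>j \<in> agents n - {i}. if i \<in> choice_set n G N j
                              then 1 / real (card (choice_set n G N j)) else 0)"

definition lev :: "nat \<Rightarrow> (nat \<Rightarrow> nat \<Rightarrow> relation) \<Rightarrow> nat set \<Rightarrow> nat \<Rightarrow> nat \<Rightarrow> nat" where
  "lev n G N l j =
    (if j \<in> Fr n G l \<inter> N then 1
     else if j \<in> Fr n G l - N then 2
     else if j \<in> Im n G l \<inter> N then 3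
     else if j \<in> Im n G l - N then 4
     else if j \<in> En n G l \<inter> N then 5
     else 6)"

definition votes :: "nat \<Rightarrow> (nat \<Rightarrow> nat \<Rightarrow> relation) \<Rightarrow> nat set \<Rightarrow> nat \<Rightarrow> nat \<Rightarrow> nat" where
  "votes n G N j k = card {l \<in> agents n. l \<noteq> j \<and> l \<noteq> k \<and> lev n G N l j < lev n G N l k}"

definition gpair :: "nat \<Rightarrow> (nat \<Rightarrow> nat \<Rightarrow> relation) \<Rightarrow> nat set \<Rightarrow> nat \<Rightarrow> nat \<Rightarrow> real" where
  "gpair n G N j k =
    (if votes n G N j k > votes n G N k j then 1
     else if votes n G N j k = votes n G N k j then 1/2 else 0)"

definition gD :: "nat \<Rightarrow> (nat \<Rightarrow> nat \<Rightarrow> relation) \<Rightarrow> nat set \<Rightarrow> nat \<Rightarrow> real" where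
  "gD n G N i = (2 / (real n * (real n - 1))) * (\<Sum>j \<in> agents n - {i}. gpair n G N i j)"

text \<open>Probability that mechanism g selects a needy agent: expectation over the
  random needy set N (each agent needy independently with probability q).\<close>
definition Pneedy :: "nat \<Rightarrow> real \<Rightarrow> (nat set \<Rightarrow> nat \<Rightarrow> real) \<Rightarrow> real" where
  "Pneedy n q g = (\<Sum>N \<in> Pow (agents n).
      q ^ card N * (1 - q) ^ (n - card N) * (\<Sum>i \<in> N. g N i))"

definition PR :: "nat \<Rightarrow> real \<Rightarrow> (nat \<Rightarrow> nat \<Rightarrow> relation) \<Rightarrow> real" where
  "PR n q G = Pneedy n q (gR n G)"

definition PD :: "nat \<Rightarrow> real \<Rightarrow> (nat \<Rightarrow> nat \<Rightarrow> relation) \<Rightarrow> real" where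
  "PD n q G = Pneedy n q (gD n G)"

end

theory Submission imports Defs begin

lemma weight_avoid:
  fixes q :: real
  assumes fin: "finite A" and TA: "T \<subseteq> A"
  shows "(\<Sum>N\<in>Pow A. q ^ card N * (1 - q) ^ (card A - card N) * (if N \<inter> T = {} then 1 else 0))
         = (1 - q) ^ card T"
proof -
  have "(\<Prod>x\<in>A. (if x \<in> T then 0 else q) + (1 - q)) =
        (\<Sum>X\<in>Pow A. (\<Prod>x\<in>X. (if x \<in> T then 0 else q)) * (\<Prod>x\<in>A-X. (1 - q)))"
    by (rule prod_add[OF fin])
  also have "\<dots> = (\<Sum>N\<in>Pow A. q ^ card N * (1 - q) ^ (card A - card N) * (if N \<inter> T = {} then 1 else 0))"
  proof (rule sum.cong[OF refl])
    fix X assume X: "X \<in> Pow A"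
    then have fX: "finite X" using fin finite_subset by blast
    have c: "card (A - X) = card A - card X" using X fin by (simp add: card_Diff_subset finite_subset)
    show "(\<Prod>x\<in>X. (if x \<in> T then 0 else q)) * (\<Prod>x\<in>A-X. (1 - q)) =
          q ^ card X * (1 - q) ^ (card A - card X) * (if X \<inter> T = {} then 1 else 0)"
    proof (cases "X \<inter> T = {}")
      case True
      then have "(\<Prod>x\<in>X. (if x \<in> T then 0 else q)) = (\<Prod>x\<in>X. q)"
        by (intro prod.cong) auto
      then show ?thesis using True c by simp
    next
      case False
      then obtain x where "x \<in> X" "x \<in> T" by blast
      then have "(\<Prod>x\<in>X. (if x \<in> T then 0 else q)) = 0"
        using fX by (intro prod_zero) auto
      then show ?thesis using False by simp
    qed
  qed
  finally have e: "(\<Prod>x\<in>A. (if x \<in> T then 0 else q) + (1 - q)) = (\<Sum>N\<in>Pow A. q ^ card N * (1 - q) ^ (card A - card N) * (if N \<inter> T = {} then 1 else 0))" .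
  have "(\<Prod>x\<in>A. (if x \<in> T then 0 else q) + (1 - q)) = (\<Prod>x\<in>A. (if x \<in> T then 1 - q else 1))"
    by (intro prod.cong) auto
  also have "\<dots> = (\<Prod>x\<in>A \<inter> T. 1 - q)"
    using fin by (simp add: prod.If_cases)
  also have "A \<inter> T = T" using TA by blast
  finally show ?thesis using e by simp
qed

lemma weight_total:
  fixes q :: real
  assumes fin: "finite A"
  shows "(\<Sum>N\<in>Pow A. q ^ card N * (1 - q) ^ (card A - card N)) = 1"
  using weight_avoid[OF fin, of "{}" q] by simp

lemma weight_hit:
  fixes q :: real
  assumes fin: "finite A" and TA: "T \<subseteq> A"
  shows "(\<Sum>N\<in>Pow A. q ^ card N * (1 - q) ^ (card A - card N) * (if N \<inter> T \<noteq> {} then 1 else 0))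
         = 1 - (1 - q) ^ card T"
proof -
  have "(\<Sum>N\<in>Pow A. q ^ card N * (1 - q) ^ (card A - card N) * (if N \<inter> T \<noteq> {} then 1 else 0))
     = (\<Sum>N\<in>Pow A. q ^ card N * (1 - q) ^ (card A - card N) - q ^ card N * (1 - q) ^ (card A - card N) * (if N \<inter> T = {} then 1 else 0))"
    by (intro sum.cong) auto
  also have "\<dots> = 1 - (1 - q) ^ card T"
    by (simp only: sum_subtractf weight_total[OF fin] weight_avoid[OF fin TA])
  finally show ?thesis .
qed

lemma finite_agents[simp]: "finite (agents n)" and card_agents[simp]: "card (agents n) = n"
  by (auto simp: agents_def)

lemma gpair_sum: "gpair n G N i j + gpair n G N j i = 1"
  by (auto simp: gpair_def)

lemma gpair_nonneg: "0 \<le> gpair n G N i j"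
  by (auto simp: gpair_def)

lemma swap_offdiag:
  fixes f :: "nat \<Rightarrow> nat \<Rightarrow> real"
  assumes "finite A"
  shows "(\<Sum>i\<in>A. \<Sum>j\<in>A-{i}. f i j) = (\<Sum>i\<in>A. \<Sum>j\<in>A-{i}. f j i)"
proof -
  have e: "(\<Sum>j\<in>A-{i}. g j) = (\<Sum>j\<in>A. if j \<noteq> i then g j else (0::real))" for g i
  proof -
    have "A \<inter> {j. j \<noteq> i} = A - {i}" by auto
    then show ?thesis using assms by (simp add: sum.If_cases)
  qed
  show ?thesis
    apply (simp only: e)
    apply (subst sum.swap)
    apply (intro sum.cong refl)
    by auto
qed

lemma count_offdiag:
  assumes "finite A"
  shows "(\<Sum>i\<in>A. \<Sum>j\<in>A-{i}. (c::real)) = real (card A) * (real (card A) - 1) * c"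
proof -
  have "(\<Sum>i\<in>A. \<Sum>j\<in>A-{i}. c) = (\<Sum>i\<in>A. (real (card A) - 1) * c)"
  proof (intro sum.cong refl)
    fix i assume "i \<in> A"
    then have "card (A - {i}) = card A - 1" "card A \<ge> 1" using assms
      by (auto simp: card_Diff_singleton Suc_le_eq card_gt_0_iff)
    then show "(\<Sum>j\<in>A-{i}. c) = (real (card A) - 1) * c" by (simp add: of_nat_diff)
  qed
  then show ?thesis by simp
qed

lemma pair_bound:
  assumes NA: "N \<subseteq> agents n"
  shows "2 * (\<Sum>i\<in>N. \<Sum>j\<in>agents n-{i}. gpair n G N i j)
     \<le> (\<Sum>i\<in>agents n. \<Sum>j\<in>agents n-{i}. if N \<inter> {i, j} \<noteq> {} then 1 else 0)"
proof -
  let ?A = "agents n"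
  define h where "h i j = (if i \<in> N then gpair n G N i j else 0)" for i j
  have "(\<Sum>i\<in>N. \<Sum>j\<in>?A-{i}. gpair n G N i j) = (\<Sum>i\<in>?A. \<Sum>j\<in>?A-{i}. h i j)"
  proof -
    have "(\<Sum>i\<in>?A. \<Sum>j\<in>?A-{i}. h i j) = (\<Sum>i\<in>?A. if i \<in> N then (\<Sum>j\<in>?A-{i}. gpair n G N i j) else 0)"
      by (intro sum.cong refl) (auto simp: h_def)
    also have "\<dots> = (\<Sum>i\<in>?A \<inter> N. \<Sum>j\<in>?A-{i}. gpair n G N i j)"
      by (simp add: sum.If_cases)
    also have "?A \<inter> N = N" using NA by blast
    finally show ?thesis by simp
  qed
  then have "2 * (\<Sum>i\<in>N. \<Sum>j\<in>?A-{i}. gpair n G N i j)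
     = (\<Sum>i\<in>?A. \<Sum>j\<in>?A-{i}. h i j) + (\<Sum>i\<in>?A. \<Sum>j\<in>?A-{i}. h j i)"
    using swap_offdiag[of ?A h] by simp
  also have "\<dots> = (\<Sum>i\<in>?A. \<Sum>j\<in>?A-{i}. h i j + h j i)"
    by (simp add: sum.distrib)
  also have "\<dots> \<le> (\<Sum>i\<in>?A. \<Sum>j\<in>?A-{i}. if N \<inter> {i, j} \<noteq> {} then 1 else 0)"
  proof (intro sum_mono)
    fix i j
    have s: "gpair n G N i j + gpair n G N j i = 1" by (rule gpair_sum)
    show "h i j + h j i \<le> (if N \<inter> {i, j} \<noteq> {} then 1 else 0)"
      using s gpair_nonneg[of n G N i j] gpair_nonneg[of n G N j i]
      by (auto simp: h_def)
  qed
  finally show ?thesis .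
qed

lemma PD_bound:
  fixes q :: real
  assumes n2: "n \<ge> 2" and q0: "0 \<le> q" and q1: "q \<le> 1"
  shows "PD n q G \<le> 1 - (1 - q) ^ 2"
proof -
  let ?A = "agents n"
  define w where "w N = q ^ card N * (1 - q) ^ (n - card N)" for N :: "nat set"
  define c where "c = 2 / (real n * (real n - 1))"
  have w0: "w N \<ge> 0" for N using q0 q1 by (simp add: w_def)
  have nn: "real n * (real n - 1) > 0" using n2 by simp
  have c0: "c \<ge> 0" using nn by (simp add: c_def)
  have "PD n q G = (\<Sum>N\<in>Pow ?A. w N * (c * (\<Sum>i\<in>N. \<Sum>j\<in>?A-{i}. gpair n G N i j)))"
    unfolding PD_def Pneedy_def gD_def w_def c_def by (simp add: sum_distrib_left)
  also have "\<dots> \<le> (\<Sum>N\<in>Pow ?A. w N * (c / 2 * (\<Sum>i\<in>?A. \<Sum>j\<in>?A-{i}. if N \<inter> {i, j} \<noteq> {} then 1 else 0)))"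
  proof (intro sum_mono mult_left_mono w0)
    fix N assume "N \<in> Pow ?A"
    then have pb: "2 * (\<Sum>i\<in>N. \<Sum>j\<in>agents n-{i}. gpair n G N i j)
     \<le> (\<Sum>i\<in>agents n. \<Sum>j\<in>agents n-{i}. if N \<inter> {i, j} \<noteq> {} then 1 else 0)"
      by (intro pair_bound) auto
    then show "c * (\<Sum>i\<in>N. \<Sum>j\<in>?A-{i}. gpair n G N i j) \<le> c / 2 * (\<Sum>i\<in>?A. \<Sum>j\<in>?A-{i}. if N \<inter> {i, j} \<noteq> {} then 1 else 0)"
      using c0 mult_left_mono[OF pb, of "c/2"] by (simp add: mult_ac)
  qed
  also have "\<dots> = c / 2 * (\<Sum>i\<in>?A. \<Sum>j\<in>?A-{i}. \<Sum>N\<in>Pow ?A. w N * (if N \<inter> {i, j} \<noteq> {} then 1 else 0))"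
    by (simp add: sum_distrib_left sum_distrib_right mult_ac sum.swap[of _ "Pow ?A"])
  also have "\<dots> = c / 2 * (\<Sum>i\<in>?A. \<Sum>j\<in>?A-{i}. 1 - (1 - q) ^ 2)"
  proof -
    have "(\<Sum>N\<in>Pow ?A. w N * (if N \<inter> {i, j} \<noteq> {} then 1 else 0)) = 1 - (1 - q) ^ 2"
      if "i \<in> ?A" "j \<in> ?A - {i}" for i j
    proof -
      have "{i, j} \<subseteq> ?A" "card {i, j} = 2" using that by auto
      then show ?thesis using weight_hit[of ?A "{i,j}" q] by (simp add: w_def)
    qed
    then show ?thesis by (intro arg_cong[where f="\<lambda>x. c / 2 * x"] sum.cong refl) auto
  qed
  also have "\<dots> = 1 - (1 - q) ^ 2"
    using nn n2 by (simp add: count_offdiag c_def)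
  finally show ?thesis .
qed

definition Sset :: "nat \<Rightarrow> (nat \<Rightarrow> nat \<Rightarrow> relation) \<Rightarrow> nat \<Rightarrow> nat set" where
  "Sset n G j = (if Fr n G j \<noteq> {} then Fr n G j else if Im n G j \<noteq> {} then Im n G j else En n G j)"

lemma choice_Sset: "choice_set n G N j = (if Sset n G j \<inter> N \<noteq> {} then Sset n G j \<inter> N else Sset n G j)"
  by (simp add: choice_set_def Sset_def Let_def)

lemma Sset_sub: "Sset n G j \<subseteq> agents n - {j}"
  by (auto simp: Sset_def Fr_def Im_def En_def)

lemma per_agent:
  assumes "N \<subseteq> agents n"
  shows "(\<Sum>i\<in>N. if j \<noteq> i then (if i \<in> choice_set n G N j then 1 / real (card (choice_set n G N j)) else 0) else 0)
     \<ge> (if N \<inter> Sset n G j \<noteq> {} then 1 else 0)"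
proof (cases "N \<inter> Sset n G j \<noteq> {}")
  case True
  let ?C = "Sset n G j \<inter> N"
  have C: "choice_set n G N j = ?C" using True by (simp add: choice_Sset Int_commute)
  have fN: "finite N" by (rule finite_subset[OF assms finite_agents])
  have fC: "finite ?C" using fN by auto
  have jC: "j \<notin> ?C" using Sset_sub[of n G j] by auto
  have "(\<Sum>i\<in>N. if j \<noteq> i then (if i \<in> choice_set n G N j then 1 / real (card (choice_set n G N j)) else 0) else 0)
      = (\<Sum>i\<in>N. if i \<in> ?C then 1 / real (card ?C) else 0)"
    using jC C by (intro sum.cong refl) auto
  also have "\<dots> = (\<Sum>i\<in>?C. 1 / real (card ?C))"
    by (rule sum.mono_neutral_cong_right[OF fN]) auto
  also have "(\<Sum>i\<in>?C. 1 / real (card ?C)) = 1"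
    using True fC by (simp add: Int_commute card_gt_0_iff)
  finally show ?thesis using True by simp
next
  case False
  then show ?thesis by (simp add: sum_nonneg)
qed

lemma PR_lower:
  fixes q :: real
  assumes n1: "n \<ge> 1" and q0: "0 \<le> q" and q1: "q \<le> 1"
    and S2: "\<And>j. j \<in> agents n \<Longrightarrow> card (Sset n G j) \<ge> 2"
  shows "PR n q G \<ge> 1 - (1 - q) ^ 2"
proof -
  let ?A = "agents n"
  define w where "w N = q ^ card N * (1 - q) ^ (n - card N)" for N :: "nat set"
  define t where "t N i j = (if i \<in> choice_set n G N j then 1 / real (card (choice_set n G N j)) else 0)" for N i j
  have w0: "w N \<ge> 0" for N using q0 q1 by (simp add: w_def)
  have e: "(\<Sum>j\<in>?A-{i}. g j) = (\<Sum>j\<in>?A. if j \<noteq> i then g j else (0::real))" for g i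
  proof -
    have "?A \<inter> {j. j \<noteq> i} = ?A - {i}" by auto
    then show ?thesis by (simp add: sum.If_cases)
  qed
  have "1 - (1 - q) ^ 2 = (1 / real n) * (\<Sum>j\<in>?A. 1 - (1 - q) ^ 2)"
    using n1 by simp
  also have "\<dots> \<le> (1 / real n) * (\<Sum>j\<in>?A. \<Sum>N\<in>Pow ?A. w N * (if N \<inter> Sset n G j \<noteq> {} then 1 else 0))"
  proof (intro mult_left_mono sum_mono)
    fix j assume j: "j \<in> ?A"
    have sub: "Sset n G j \<subseteq> ?A" using Sset_sub[of n G j] by auto
    have "(1 - q) ^ card (Sset n G j) \<le> (1 - q) ^ 2"
      using S2[OF j] q0 q1 by (intro power_decreasing) auto
    then show "1 - (1 - q) ^ 2 \<le> (\<Sum>N\<in>Pow ?A. w N * (if N \<inter> Sset n G j \<noteq> {} then 1 else 0))"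
      using weight_hit[OF finite_agents sub, of q] by (simp add: w_def Int_commute)
  qed simp
  also have "\<dots> = (\<Sum>N\<in>Pow ?A. w N * ((1 / real n) * (\<Sum>j\<in>?A. (if N \<inter> Sset n G j \<noteq> {} then 1 else 0))))"
    by (simp add: sum_distrib_left sum_distrib_right mult_ac sum.swap[of _ "Pow ?A"])
  also have "\<dots> \<le> (\<Sum>N\<in>Pow ?A. w N * (\<Sum>i\<in>N. gR n G N i))"
  proof (intro sum_mono mult_left_mono w0)
    fix N assume N: "N \<in> Pow ?A"
    have "(\<Sum>i\<in>N. gR n G N i) = (1 / real n) * (\<Sum>i\<in>N. \<Sum>j\<in>?A. if j \<noteq> i then t N i j else 0)"
      unfolding gR_def t_def by (simp add: e sum_distrib_left)
    also have "\<dots> = (1 / real n) * (\<Sum>j\<in>?A. \<Sum>i\<in>N. if j \<noteq> i then t N i j else 0)"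
      by (simp add: sum.swap[of _ N])
    also have "\<dots> \<ge> (1 / real n) * (\<Sum>j\<in>?A. (if N \<inter> Sset n G j \<noteq> {} then 1 else 0))"
      using N per_agent[of N n] unfolding t_def
      by (intro mult_left_mono sum_mono) auto
    finally show "(1 / real n) * (\<Sum>j\<in>?A. (if N \<inter> Sset n G j \<noteq> {} then 1 else 0)) \<le> (\<Sum>i\<in>N. gR n G N i)" .
  qed
  also have "\<dots> = PR n q G"
    unfolding PR_def Pneedy_def w_def by simp
  finally show ?thesis .
qed

theorem mainTheorem7:
  fixes n :: nat and q :: real and G :: "nat \<Rightarrow> nat \<Rightarrow> relation"
  assumes "n \<ge> 3" and "0 < q" and "q < 1" and "network n G"
  shows "PD n q G \<le> 1 - (1 - q) ^ 2
    \<and> ((\<forall>j \<in> agents n. card (Fr n G j) \<ge> 2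
          \<or> (Fr n G j = {} \<and> card (Im n G j) \<ge> 2)
          \<or> En n G j = agents n - {j})
        \<longrightarrow> PR n q G \<ge> PD n q G)"
proof -
  have pd: "PD n q G \<le> 1 - (1 - q) ^ 2" using assms by (intro PD_bound) auto
  moreover have "PR n q G \<ge> PD n q G"
    if H: "\<forall>j \<in> agents n. card (Fr n G j) \<ge> 2
          \<or> (Fr n G j = {} \<and> card (Im n G j) \<ge> 2)
          \<or> En n G j = agents n - {j}"
  proof -
    have "card (Sset n G j) \<ge> 2" if j: "j \<in> agents n" for j
    proof -
      consider "card (Fr n G j) \<ge> 2" | "Fr n G j = {} \<and> card (Im n G j) \<ge> 2" | "En n G j = agents n - {j}"
        using H j by blast
      then show ?thesis
      proof cases
        case 1
        then have "Fr n G j \<noteq> {}" by auto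
        then show ?thesis using 1 by (simp add: Sset_def)
      next
        case 2
        then have "Im n G j \<noteq> {}" by auto
        then show ?thesis using 2 by (simp add: Sset_def)
      next
        case 3
        have "Fr n G j = {}"
        proof (rule ccontr)
          assume "Fr n G j \<noteq> {}"
          then obtain i where i: "i \<in> Fr n G j" by blast
          then have "i \<in> agents n - {j}" by (simp add: Fr_def)
          then have "i \<in> En n G j" using 3 by simp
          then show False using i by (simp add: Fr_def En_def)
        qed
        moreover have "Im n G j = {}"
        proof (rule ccontr)
          assume "Im n G j \<noteq> {}"
          then obtain i where i: "i \<in> Im n G j" by blast
          then have "i \<in> agents n - {j}" by (simp add: Im_def)
          then have "i \<in> En n G j" using 3 by simp
          then show False using i by (simp add: Im_def En_def)
        qed
        moreover have "card (agents n - {j}) = n - 1" using j by simp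
        ultimately show ?thesis using 3 assms(1) by (simp add: Sset_def)
      qed
    qed
    then have "PR n q G \<ge> 1 - (1 - q) ^ 2" using assms by (intro PR_lower) auto
    then show ?thesis using pd by linarith
  qed
  ultimately show ?thesis by blast
qed

end
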